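(* Every simple rule defined on $\mathcal{E}_{\mathcal{SP}}$ satisfies not obvious manipulability (NOM).
   Context: Let $N=\{1,\dots,n\}$ be a finite set of agents. A preference $R_i$ is a continuous complete preorder on $\mathbb{R}_+\cup\{\infty\}$, with strict part $P_i$ and indifference $I_i$. Its peak $p(R_i)$ is the set of its maximal elements; when a singleton, we identify it with its element. $R_i$ is single-peaked if $p(R_i)$ is a singleton and for all $x,x'\in\mathbb{R}_+$, $xP_ix'$ whenever $x'<x\le p(R_i)$ or $p(R_i)\le x<x'$; $\mathcal{SP}$ denotes the set of these. An economy is $(R,\Omega)$ with $R\in\mathcal{SP}^n$, $\Omega>0$; $\mathcal{E}_{\mathcal{SP}}$ is the set of economies. A rule is a map $\varphi:\mathcal{E}_{\mathcal{SP}}\to\mathbb{R}^n_+$ with $\sum_j\varphi_j(R,\Omega)=\Omega$. Own-peak-onliness: $p(R_i')=p(R_i)$ implies $\varphi_i(R,\Omega)=\varphi_i(R_i',R_{-i},\Omega)$. Option set: $O^\varphi(R_i,\Omega)=\{\varphi_i(R_i,R_{-i},\Omega):R_{-i}\in\mathcal{SP}^{n-1}\}$. $R_i'$ is a manipulation of $\varphi$ at $(R_i,\Omega)$ if $\varphi_i(R_i',R_{-i},\Omega)P_i\varphi_i(R_i,R_{-i},\Omega)$ for some $R_{-i}$; an obvious manipulation if moreover for each $x'\in O^\varphi(R_i',\Omega)$ there is $x\in O^\varphi(R_i,\Omega)$ with $x'P_ix$. $\varphi$ is NOM if it admits no obvious manipulation. Simple rules: $z(R,\Omega)=\sum_jp(R_j)-\Omega$.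 Agent $i$ is simple if either $z(R,\Omega)\ge0$ and $p(R_i)<\Omega/n$, or $z(R,\Omega)\le0$ and $p(R_i)>\Omega/n$; $N^+(R,\Omega)$ is the set of simple agents, $N^-(R,\Omega)=N\setminus N^+(R,\Omega)$, and $E(R,\Omega)=\left|\Omega-\left(\sum_{j\in N^+}p(R_j)+|N^-|\frac{\Omega}{n}\right)\right|$. An own-peak-only rule $\varphi$ is simple if for every economy and every $i$: $\varphi_i=p(R_i)$ for $i\in N^+$; $\varphi_i=\frac{\Omega}{n}+\nu_i$ for $i\in N^-$ when $z\ge0$; $\varphi_i=\frac{\Omega}{n}-\nu_i$ for $i\in N^-$ when $z\le0$; with $0\le\nu_i\le|p(R_i)-\frac{\Omega}{n}|$ and $\sum_{j\in N^-}\nu_j=E(R,\Omega)$. *)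

theory Defs
  imports "HOL-Analysis.Analysis"
begin

text \<open>A preference is a binary relation \<open>R x y\<close> ("x is at least as good as y") on this space.\<close>

type_synonym pref = "ereal \<Rightarrow> ereal \<Rightarrow> bool"

definition cdom :: "ereal set" where
  "cdom = {x. 0 \<le> x}"

definition strict :: "pref \<Rightarrow> ereal \<Rightarrow> ereal \<Rightarrow> bool" where
  "strict R x y \<longleftrightarrow> R x y \<and> \<not> R y x"

definition cont_complete_preorder :: "pref \<Rightarrow> bool" where
  "cont_complete_preorder R \<longleftrightarrow>
     (\<forall>x y. R x y \<longrightarrow> x \<in> cdom \<and> y \<in> cdom) \<and>
     (\<forall>x\<in>cdom. \<forall>y\<in>cdom. R x y \<or> R y x) \<and>
     (\<forall>x\<in>cdom. \<forall>y\<in>cdom. \<forall>w\<in>cdom. R x y \<longrightarrow> R y w \<longrightarrow> R x w) \<and>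
     (\<forall>y\<in>cdom. closed {x. R x y} \<and> closed {x. R y x})"

definition peak_set :: "pref \<Rightarrow> ereal set" where
  "peak_set R = {x \<in> cdom. \<forall>y\<in>cdom. R x y}"

definition peak :: "pref \<Rightarrow> ereal" where
  "peak R = (THE p. peak_set R = {p})"

definition SP :: "pref set" where
  "SP = {R. cont_complete_preorder R \<and> (\<exists>p. peak_set R = {p}) \<and>
     (\<forall>x x'. 0 \<le> x' \<and> x \<noteq> \<infinity> \<and> x' < x \<and> x \<le> peak R \<longrightarrow> strict R x x') \<and>
     (\<forall>x x'. 0 \<le> x \<and> x' \<noteq> \<infinity> \<and> peak R \<le> x \<and> x < x' \<longrightarrow> strict R x x')}"

text \<open>Agents are the elements of a finite type \<open>'n\<close>, so \<open>n = CARD('n)\<close>.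
A rule maps a profile and an endowment \<open>\<Omega>\<close> to an allocation.\<close>

definition economy :: "('n \<Rightarrow> pref) \<Rightarrow> real \<Rightarrow> bool" where
  "economy R \<Omega> \<longleftrightarrow> (\<forall>i. R i \<in> SP) \<and> \<Omega> > 0"

definition is_rule :: "(('n::finite \<Rightarrow> pref) \<Rightarrow> real \<Rightarrow> 'n \<Rightarrow> real) \<Rightarrow> bool" where
  "is_rule \<phi> \<longleftrightarrow> (\<forall>R \<Omega>. economy R \<Omega> \<longrightarrow>
      (\<forall>i. 0 \<le> \<phi> R \<Omega> i) \<and> (\<Sum>j\<in>UNIV. \<phi> R \<Omega> j) = \<Omega>)"

definition own_peak_only :: "(('n \<Rightarrow> pref) \<Rightarrow> real \<Rightarrow> 'n \<Rightarrow> real) \<Rightarrow> bool" where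
  "own_peak_only \<phi> \<longleftrightarrow> (\<forall>R \<Omega> i R'. economy R \<Omega> \<longrightarrow> R' \<in> SP \<longrightarrow> peak R' = peak (R i) \<longrightarrow>
      \<phi> R \<Omega> i = \<phi> (R(i := R')) \<Omega> i)"

definition option_set :: "(('n \<Rightarrow> pref) \<Rightarrow> real \<Rightarrow> 'n \<Rightarrow> real) \<Rightarrow> 'n \<Rightarrow> pref \<Rightarrow> real \<Rightarrow> real set" where
  "option_set \<phi> i Ri \<Omega> = {\<phi> (R(i := Ri)) \<Omega> i | R. \<forall>j. R j \<in> SP}"

definition manipulation :: "(('n \<Rightarrow> pref) \<Rightarrow> real \<Rightarrow> 'n \<Rightarrow> real) \<Rightarrow> 'n \<Rightarrow> pref \<Rightarrow> pref \<Rightarrow> real \<Rightarrow> bool" where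
  "manipulation \<phi> i Ri Ri' \<Omega> \<longleftrightarrow>
     (\<exists>R. (\<forall>j. R j \<in> SP) \<and>
        strict Ri (ereal (\<phi> (R(i := Ri')) \<Omega> i)) (ereal (\<phi> (R(i := Ri)) \<Omega> i)))"

definition obvious_manipulation :: "(('n \<Rightarrow> pref) \<Rightarrow> real \<Rightarrow> 'n \<Rightarrow> real) \<Rightarrow> 'n \<Rightarrow> pref \<Rightarrow> pref \<Rightarrow> real \<Rightarrow> bool" where
  "obvious_manipulation \<phi> i Ri Ri' \<Omega> \<longleftrightarrow> manipulation \<phi> i Ri Ri' \<Omega> \<and>
     (\<forall>x'\<in>option_set \<phi> i Ri' \<Omega>. \<exists>x\<in>option_set \<phi> i Ri \<Omega>. strict Ri (ereal x') (ereal x))"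

definition NOM :: "(('n \<Rightarrow> pref) \<Rightarrow> real \<Rightarrow> 'n \<Rightarrow> real) \<Rightarrow> bool" where
  "NOM \<phi> \<longleftrightarrow> \<not> (\<exists>i Ri Ri' \<Omega>. Ri \<in> SP \<and> Ri' \<in> SP \<and> \<Omega> > 0 \<and> obvious_manipulation \<phi> i Ri Ri' \<Omega>)"

definition zexc :: "('n::finite \<Rightarrow> pref) \<Rightarrow> real \<Rightarrow> ereal" where
  "zexc R \<Omega> = (\<Sum>j\<in>UNIV. peak (R j)) - ereal \<Omega>"

definition eq_share :: "real \<Rightarrow> 'n::finite itself \<Rightarrow> real" where
  "eq_share \<Omega> _ = \<Omega> / real CARD('n)"

definition Nplus :: "('n::finite \<Rightarrow> pref) \<Rightarrow> real \<Rightarrow> 'n set" where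
  "Nplus R \<Omega> = {i. (zexc R \<Omega> \<ge> 0 \<and> peak (R i) < ereal (eq_share \<Omega> TYPE('n))) \<or>
                     (zexc R \<Omega> \<le> 0 \<and> peak (R i) > ereal (eq_share \<Omega> TYPE('n)))}"

definition Nminus :: "('n::finite \<Rightarrow> pref) \<Rightarrow> real \<Rightarrow> 'n set" where
  "Nminus R \<Omega> = UNIV - Nplus R \<Omega>"

definition Eterm :: "('n::finite \<Rightarrow> pref) \<Rightarrow> real \<Rightarrow> ereal" where
  "Eterm R \<Omega> = \<bar>ereal \<Omega> - ((\<Sum>j\<in>Nplus R \<Omega>. peak (R j))
        + ereal (real (card (Nminus R \<Omega>)) * eq_share \<Omega> TYPE('n)))\<bar>"

definition simple_rule :: "(('n::finite \<Rightarrow> pref) \<Rightarrow> real \<Rightarrow> 'n \<Rightarrow> real) \<Rightarrow> bool" where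
  "simple_rule \<phi> \<longleftrightarrow> is_rule \<phi> \<and> own_peak_only \<phi> \<and>
    (\<forall>R \<Omega>. economy R \<Omega> \<longrightarrow>
      (\<exists>\<nu> :: 'n \<Rightarrow> real.
         (\<forall>i\<in>Nplus R \<Omega>. ereal (\<phi> R \<Omega> i) = peak (R i)) \<and>
         (\<forall>i\<in>Nminus R \<Omega>. zexc R \<Omega> \<ge> 0 \<longrightarrow> \<phi> R \<Omega> i = eq_share \<Omega> TYPE('n) + \<nu> i) \<and>
         (\<forall>i\<in>Nminus R \<Omega>. zexc R \<Omega> \<le> 0 \<longrightarrow> \<phi> R \<Omega> i = eq_share \<Omega> TYPE('n) - \<nu> i) \<and>
         (\<forall>i\<in>Nminus R \<Omega>. 0 \<le> \<nu> i \<and> ereal (\<nu> i) \<le> \<bar>peak (R i) - ereal (eq_share \<Omega> TYPE('n))\<bar>) \<and>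
         ereal (\<Sum>j\<in>Nminus R \<Omega>. \<nu> j) = Eterm R \<Omega>))"

end

theory Submission
  imports Defs
begin

definition prefq :: "real \<Rightarrow> pref" where
  "prefq q x y \<longleftrightarrow> 0 \<le> x \<and> 0 \<le> y \<and>
     (y = \<infinity> \<or> (x \<noteq> \<infinity> \<and> \<bar>real_of_ereal x - q\<bar> \<le> \<bar>real_of_ereal y - q\<bar>))"

lemma prefq_closed1:
  assumes "0 \<le> q" "y \<in> cdom"
  shows "closed {x. prefq q x y}"
proof (cases y)
  case (real r)
  define d where "d = \<bar>r - q\<bar>"
  define lo where "lo = max 0 (q - d)"
  have r0: "0 \<le> r" using real assms by (simp add: cdom_def)
  have fin: "prefq q (ereal s) y \<longleftrightarrow> lo \<le> s \<and> s \<le> q + d" for s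
  proof -
    have "prefq q (ereal s) y \<longleftrightarrow> 0 \<le> s \<and> \<bar>s - q\<bar> \<le> d"
      using real r0 by (simp add: prefq_def d_def)
    also have "\<dots> \<longleftrightarrow> lo \<le> s \<and> s \<le> q + d" unfolding lo_def by (auto simp: abs_le_iff)
    finally show ?thesis .
  qed
  have "{x. prefq q x y} = {ereal lo .. ereal (q + d)}"
  proof (intro set_eqI)
    fix x show "x \<in> {x. prefq q x y} \<longleftrightarrow> x \<in> {ereal lo .. ereal (q + d)}"
    proof (cases x)
      case (real s) then show ?thesis using fin by simp
    next
      case PInf then show ?thesis using real by (simp add: prefq_def)
    next
      case MInf then show ?thesis by (simp add: prefq_def)
    qed
  qed
  then show ?thesis by simp
next
  case PInf
  then have "{x. prefq q x y} = {0..}" by (auto simp: prefq_def)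
  then show ?thesis by simp
next
  case MInf
  then show ?thesis using assms by (simp add: cdom_def)
qed

lemma prefq_closed2:
  assumes "0 \<le> q" "y \<in> cdom"
  shows "closed {x. prefq q y x}"
proof (cases y)
  case (real r)
  define d where "d = \<bar>r - q\<bar>"
  have r0: "0 \<le> r" using real assms by (simp add: cdom_def)
  have fin: "prefq q y (ereal s) \<longleftrightarrow> (0 \<le> s \<and> s \<le> q - d) \<or> q + d \<le> s" for s
  proof -
    have "prefq q y (ereal s) \<longleftrightarrow> 0 \<le> s \<and> d \<le> \<bar>s - q\<bar>"
      using real r0 by (simp add: prefq_def d_def)
    also have "\<dots> \<longleftrightarrow> (0 \<le> s \<and> s \<le> q - d) \<or> q + d \<le> s"
      using assms(1) by (auto simp: d_def abs_if)
    finally show ?thesis .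
  qed
  have "{x. prefq q y x} = {0 .. ereal (q - d)} \<union> {ereal (q + d) ..}"
  proof (intro set_eqI)
    fix x show "x \<in> {x. prefq q y x} \<longleftrightarrow> x \<in> {0 .. ereal (q - d)} \<union> {ereal (q + d) ..}"
    proof (cases x)
      case (real s) then show ?thesis using fin by simp
    next
      case PInf then show ?thesis using real r0 by (simp add: prefq_def)
    next
      case MInf then show ?thesis by (simp add: prefq_def)
    qed
  qed
  then show ?thesis by (simp add: closed_Un)
next
  case PInf
  then have "{x. prefq q y x} = {\<infinity>}" by (auto simp: prefq_def)
  then show ?thesis by simp
next
  case MInf
  then show ?thesis using assms by (simp add: cdom_def)
qed

lemma prefq_peak_set:
  assumes "0 \<le> q"
  shows "peak_set (prefq q) = {ereal q}"
proof (intro set_eqI iffI)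
  fix x assume "x \<in> peak_set (prefq q)"
  then have "x \<in> cdom" "prefq q x (ereal q)" using assms by (auto simp: peak_set_def cdom_def)
  then show "x \<in> {ereal q}" by (cases x) (auto simp: prefq_def)
next
  fix x assume "x \<in> {ereal q}"
  then show "x \<in> peak_set (prefq q)" using assms by (auto simp: peak_set_def cdom_def prefq_def)
qed

lemma prefq_peak:
  assumes "0 \<le> q"
  shows "peak (prefq q) = ereal q"
  unfolding peak_def prefq_peak_set[OF assms] by simp

lemma prefq_SP:
  assumes "0 \<le> q"
  shows "prefq q \<in> SP"
proof -
  have ccp: "cont_complete_preorder (prefq q)"
    unfolding cont_complete_preorder_def
  proof (intro conjI ballI allI impI)
    fix x y assume "prefq q x y" then show "x \<in> cdom" "y \<in> cdom"
      by (auto simp: prefq_def cdom_def)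
  next
    fix x y assume "x \<in> cdom" "y \<in> cdom"
    then show "prefq q x y \<or> prefq q y x" by (auto simp: prefq_def cdom_def)
  next
    fix x y w assume "x \<in> cdom" "y \<in> cdom" "w \<in> cdom" "prefq q x y" "prefq q y w"
    then show "prefq q x w" by (auto simp: prefq_def cdom_def)
  next
    fix y assume "y \<in> cdom"
    then show "closed {x. prefq q x y}" "closed {x. prefq q y x}"
      using prefq_closed1 prefq_closed2 assms by auto
  qed
  have c1: "strict (prefq q) x x'" if "0 \<le> x'" "x \<noteq> \<infinity>" "x' < x" "x \<le> ereal q" for x x'
  proof -
    have "x' \<noteq> \<infinity>" "x' \<noteq> -\<infinity>" "x \<noteq> -\<infinity>" "x \<noteq> \<infinity>" using that by auto
    then obtain a b where a: "x = ereal a" and b: "x' = ereal b" by (cases x; cases x') auto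
    have "0 \<le> b" "b < a" "a \<le> q" using that a b by auto
    then have e: "\<bar>a - q\<bar> = q - a" "\<bar>b - q\<bar> = q - b" by auto
    show ?thesis using a b \<open>0 \<le> b\<close> \<open>b < a\<close> by (simp add: strict_def prefq_def e)
  qed
  have c2: "strict (prefq q) x x'" if "0 \<le> x" "x' \<noteq> \<infinity>" "ereal q \<le> x" "x < x'" for x x'
  proof -
    have "x \<noteq> \<infinity>" "x \<noteq> -\<infinity>" "x' \<noteq> -\<infinity>" "x' \<noteq> \<infinity>" using that by auto
    then obtain a b where a: "x = ereal a" and b: "x' = ereal b" by (cases x; cases x') auto
    have "0 \<le> a" "a < b" "q \<le> a" using that a b by auto
    then have e: "\<bar>a - q\<bar> = a - q" "\<bar>b - q\<bar> = b - q" by auto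
    show ?thesis using a b \<open>0 \<le> a\<close> \<open>a < b\<close> by (simp add: strict_def prefq_def e)
  qed
  show ?thesis unfolding SP_def mem_Collect_eq prefq_peak[OF assms]
  proof (intro conjI)
    show "\<exists>p. peak_set (prefq q) = {p}" using prefq_peak_set[OF assms] by blast
    show "cont_complete_preorder (prefq q)" by (rule ccp)
    show "\<forall>x x'. 0 \<le> x' \<and> x \<noteq> \<infinity> \<and> x' < x \<and> x \<le> ereal q \<longrightarrow> strict (prefq q) x x'"
      using c1 by simp
    show "\<forall>x x'. 0 \<le> x \<and> x' \<noteq> \<infinity> \<and> ereal q \<le> x \<and> x < x' \<longrightarrow> strict (prefq q) x x'"
      using c2 by simp
  qed
qed

lemma SP_weakly_better:
  assumes "R \<in> SP" "0 \<le> q" "0 \<le> x"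
    and "(ereal q \<le> ereal x \<and> ereal x \<le> peak R) \<or> (peak R \<le> ereal x \<and> ereal x \<le> ereal q)"
  shows "R (ereal x) (ereal q)"
proof -
  from assms(1) have ccp: "cont_complete_preorder R"
    and c1: "\<forall>x x'. 0 \<le> x' \<and> x \<noteq> \<infinity> \<and> x' < x \<and> x \<le> peak R \<longrightarrow> strict R x x'"
    and c2: "\<forall>x x'. 0 \<le> x \<and> x' \<noteq> \<infinity> \<and> peak R \<le> x \<and> x < x' \<longrightarrow> strict R x x'"
    unfolding SP_def by blast+
  have h: "(q \<le> x \<and> ereal x \<le> peak R) \<or> (peak R \<le> ereal x \<and> x \<le> q)"
    using assms(4) by simp
  show ?thesis
  proof (cases "x = q")
    case True
    have "ereal q \<in> cdom" using assms(2) by (simp add: cdom_def)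
    then have "R (ereal q) (ereal q)" using ccp unfolding cont_complete_preorder_def by blast
    then show ?thesis using True by simp
  next
    case False
    show ?thesis
    proof (cases "q < x")
      case True
      then have "ereal x \<le> peak R" using h by linarith
      then have "strict R (ereal x) (ereal q)" using c1 True assms(2) by simp
      then show ?thesis by (simp add: strict_def)
    next
      case False2: False
      then have "x < q" "peak R \<le> ereal x" using h False by linarith+
      then have "strict R (ereal x) (ereal q)" using c2 assms(3) by simp
      then show ?thesis by (simp add: strict_def)
    qed
  qed
qed

lemma SP_peak:
  assumes "R \<in> SP"
  shows "peak_set R = {peak R}" "0 \<le> peak R"
proof -
  obtain p where p: "peak_set R = {p}" using assms by (auto simp: SP_def)
  then have "peak R = p" unfolding peak_def by simp
  then show "peak_set R = {peak R}" using p by simp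
  then have "peak R \<in> peak_set R" by simp
  then show "0 \<le> peak R" by (simp add: peak_set_def cdom_def)
qed

lemma upper_case:
  assumes "0 \<le> p" "ereal q \<le> p" "ereal v \<le> \<bar>p - ereal q\<bar>" "0 \<le> v"
  shows "ereal q \<le> ereal (q + v) \<and> ereal (q + v) \<le> p"
proof (cases p)
  case (real r)
  then have "q \<le> r" "v \<le> \<bar>r - q\<bar>" using assms by simp_all
  then have "q + v \<le> r" by linarith
  then show ?thesis using real assms(4) by simp
next
  case PInf then show ?thesis using assms(4) by simp
next
  case MInf then show ?thesis using assms(1) by simp
qed

lemma lower_case:
  assumes "0 \<le> p" "p \<le> ereal q" "ereal v \<le> \<bar>p - ereal q\<bar>" "0 \<le> v"
  shows "p \<le> ereal (q - v) \<and> ereal (q - v) \<le> ereal q"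
proof (cases p)
  case (real r)
  then have "r \<le> q" "v \<le> \<bar>r - q\<bar>" using assms by simp_all
  then have "r \<le> q - v" by linarith
  then show ?thesis using real assms(4) by simp
next
  case PInf then show ?thesis using assms(2) by simp
next
  case MInf then show ?thesis using assms(1) by simp
qed

theorem theorem1:
  fixes \<phi> :: "('n::finite \<Rightarrow> pref) \<Rightarrow> real \<Rightarrow> 'n \<Rightarrow> real"
  assumes "simple_rule \<phi>"
  shows "NOM \<phi>"
  unfolding NOM_def
proof
  assume "\<exists>i Ri Ri' \<Omega>. Ri \<in> SP \<and> Ri' \<in> SP \<and> \<Omega> > 0 \<and> obvious_manipulation \<phi> i Ri Ri' \<Omega>"
  then obtain i Ri Ri' \<Omega> where Ri: "Ri \<in> SP" and Ri': "Ri' \<in> SP" and Om: "\<Omega> > 0"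
    and om: "obvious_manipulation \<phi> i Ri Ri' \<Omega>" by blast
  have rule: "is_rule \<phi>" and S: "\<And>R \<Omega>. economy R \<Omega> \<Longrightarrow> (\<exists>\<nu> :: 'n \<Rightarrow> real.
         (\<forall>i\<in>Nplus R \<Omega>. ereal (\<phi> R \<Omega> i) = peak (R i)) \<and>
         (\<forall>i\<in>Nminus R \<Omega>. zexc R \<Omega> \<ge> 0 \<longrightarrow> \<phi> R \<Omega> i = eq_share \<Omega> TYPE('n) + \<nu> i) \<and>
         (\<forall>i\<in>Nminus R \<Omega>. zexc R \<Omega> \<le> 0 \<longrightarrow> \<phi> R \<Omega> i = eq_share \<Omega> TYPE('n) - \<nu> i) \<and>
         (\<forall>i\<in>Nminus R \<Omega>. 0 \<le> \<nu> i \<and> ereal (\<nu> i) \<le> \<bar>peak (R i) - ereal (eq_share \<Omega> TYPE('n))\<bar>) \<and>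
         ereal (\<Sum>j\<in>Nminus R \<Omega>. \<nu> j) = Eterm R \<Omega>)"
    using assms unfolding simple_rule_def by blast+
  define q where "q = eq_share \<Omega> TYPE('n)"
  have cpos: "0 < real CARD('n)" by simp
  have q0: "0 < q" using Om cpos by (simp add: q_def eq_share_def)
  have Omq: "\<Omega> = real CARD('n) * q" using cpos by (simp add: q_def eq_share_def)
  \<comment> \<open>Step A: the equal share is an option for Ri'\<close>
  define R0 where "R0 = (\<lambda>_::'n. prefq q)"
  define P where "P = R0(i := Ri')"
  have R0SP: "\<forall>j. R0 j \<in> SP" using prefq_SP q0 by (simp add: R0_def)
  have ecoP: "economy P \<Omega>" using R0SP Ri' Om by (simp add: economy_def P_def)
  have pkP: "peak (P j) = ereal q" if "j \<noteq> i" for j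
    using that prefq_peak q0 by (simp add: P_def R0_def)
  have p'0: "0 \<le> peak Ri'" using SP_peak(2)[OF Ri'] .
  have sumP: "(\<Sum>j\<in>UNIV. peak (P j)) = peak Ri' + ereal (\<Omega> - q)"
  proof -
    have "(\<Sum>j\<in>UNIV. peak (P j)) = peak (P i) + (\<Sum>j\<in>UNIV - {i}. peak (P j))"
      by (simp add: sum.remove)
    also have "(\<Sum>j\<in>UNIV - {i}. peak (P j)) = (\<Sum>j\<in>UNIV - {i}. ereal q)"
      by (rule sum.cong) (auto simp: pkP)
    also have "\<dots> = ereal (\<Sum>j\<in>UNIV - {i}. q)" by (simp add: sum_ereal)
    also have "(\<Sum>j\<in>UNIV - {i}. q) = real (CARD('n) - 1) * q"
      by (simp add: card_Diff_singleton)
    also have "\<dots> = \<Omega> - q" using Omq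
      by (simp add: of_nat_diff Suc_leI algebra_simps)
    finally show ?thesis by (simp add: P_def)
  qed
  have Np: "Nplus P \<Omega> = {}"
  proof (rule ccontr)
    assume "Nplus P \<Omega> \<noteq> {}"
    then obtain j where j: "j \<in> Nplus P \<Omega>" by blast
    show False
    proof (cases "j = i")
      case False
      then show ?thesis using j pkP[OF False] by (simp add: Nplus_def q_def)
    next
      case True
      then have Pj: "P j = Ri'" by (simp add: P_def)
      have z: "zexc P \<Omega> = peak Ri' + ereal (\<Omega> - q) - ereal \<Omega>"
        by (simp add: zexc_def sumP)
      show ?thesis
      proof (cases "peak Ri'")
        case (real r)
        then have "zexc P \<Omega> = ereal (r - q)" using z by simp
        then have "(0 \<le> r - q \<and> r < q) \<or> (r - q \<le> 0 \<and> q < r)"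
          using j Pj real by (simp add: Nplus_def q_def[symmetric])
        then show ?thesis by linarith
      next
        case PInf
        then have "zexc P \<Omega> = \<infinity>" using z by simp
        then show ?thesis using j Pj PInf by (simp add: Nplus_def q_def[symmetric])
      next
        case MInf
        then show ?thesis using p'0 by simp
      qed
    qed
  qed
  then have Nm: "Nminus P \<Omega> = UNIV" by (simp add: Nminus_def)
  have E0: "Eterm P \<Omega> = 0"
  proof -
    have "Eterm P \<Omega> = \<bar>ereal \<Omega> - (0 + ereal (real CARD('n) * q))\<bar>"
      unfolding Eterm_def Np Nm q_def by simp
    also have "\<dots> = 0" by (simp add: Omq[symmetric])
    finally show ?thesis .
  qed
  obtain \<nu> where
    nu1: "\<forall>i\<in>Nminus P \<Omega>. zexc P \<Omega> \<ge> 0 \<longrightarrow> \<phi> P \<Omega> i = q + \<nu> i" and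
    nu2: "\<forall>i\<in>Nminus P \<Omega>. zexc P \<Omega> \<le> 0 \<longrightarrow> \<phi> P \<Omega> i = q - \<nu> i" and
    nu3: "\<forall>i\<in>Nminus P \<Omega>. 0 \<le> \<nu> i" and
    nu4: "ereal (\<Sum>j\<in>Nminus P \<Omega>. \<nu> j) = Eterm P \<Omega>"
    using S[OF ecoP] unfolding q_def by blast
  have "(\<Sum>j\<in>UNIV. \<nu> j) = 0" using nu4 E0 Nm by simp
  then have "\<nu> i = 0" using nu3 Nm sum_nonneg_eq_0_iff[of UNIV \<nu>] by simp
  then have phiq: "\<phi> P \<Omega> i = q" using nu1 nu2 Nm by (cases "zexc P \<Omega> \<ge> 0") auto
  have qopt: "q \<in> option_set \<phi> i Ri' \<Omega>"
    unfolding option_set_def using R0SP phiq P_def by blast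
  from om qopt obtain x where xo: "x \<in> option_set \<phi> i Ri \<Omega>" and sx: "strict Ri (ereal q) (ereal x)"
    unfolding obvious_manipulation_def by blast
  from xo obtain R where RSP: "\<forall>j. R j \<in> SP" and xdef: "x = \<phi> (R(i := Ri)) \<Omega> i"
    unfolding option_set_def by blast
  define Q where "Q = R(i := Ri)"
  have ecoQ: "economy Q \<Omega>" using RSP Ri Om by (simp add: economy_def Q_def)
  have x0: "0 \<le> x" using rule ecoQ xdef unfolding is_rule_def Q_def by blast
  have Qi: "Q i = Ri" by (simp add: Q_def)
  have p0: "0 \<le> peak Ri" using SP_peak(2)[OF Ri] .
  obtain \<mu> where
    mu0: "\<forall>i\<in>Nplus Q \<Omega>. ereal (\<phi> Q \<Omega> i) = peak (Q i)" and
    mu1: "\<forall>i\<in>Nminus Q \<Omega>. zexc Q \<Omega> \<ge> 0 \<longrightarrow> \<phi> Q \<Omega> i = q + \<mu> i" and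
    mu2: "\<forall>i\<in>Nminus Q \<Omega>. zexc Q \<Omega> \<le> 0 \<longrightarrow> \<phi> Q \<Omega> i = q - \<mu> i" and
    mu3: "\<forall>i\<in>Nminus Q \<Omega>. 0 \<le> \<mu> i \<and> ereal (\<mu> i) \<le> \<bar>peak (Q i) - ereal q\<bar>"
    using S[OF ecoQ] unfolding q_def by blast
  have xQ: "x = \<phi> Q \<Omega> i" by (simp add: xdef Q_def)
  have btw: "(ereal q \<le> ereal x \<and> ereal x \<le> peak Ri) \<or> (peak Ri \<le> ereal x \<and> ereal x \<le> ereal q)"
  proof (cases "i \<in> Nplus Q \<Omega>")
    case True
    then have ex: "ereal x = peak Ri" using mu0 xQ Qi by simp
    from True have "peak Ri < ereal q \<or> peak Ri > ereal q"
      using Qi by (auto simp: Nplus_def q_def)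
    then show ?thesis using ex by auto
  next
    case False
    then have iN: "i \<in> Nminus Q \<Omega>" by (simp add: Nminus_def)
    show ?thesis
    proof (cases "zexc Q \<Omega> \<ge> 0")
      case True
      then have "\<not> peak Ri < ereal q" using False Qi by (simp add: Nplus_def q_def)
      then have "ereal q \<le> peak Ri" by simp
      moreover have "x = q + \<mu> i" using mu1 iN True xQ by simp
      moreover have "0 \<le> \<mu> i" "ereal (\<mu> i) \<le> \<bar>peak Ri - ereal q\<bar>" using mu3 iN Qi by auto
      ultimately have "ereal q \<le> ereal x \<and> ereal x \<le> peak Ri"
        using upper_case[OF p0, of q "\<mu> i"] by simp
      then show ?thesis by blast
    next
      case False2: False
      then have z: "zexc Q \<Omega> \<le> 0" by simp
      then have "\<not> peak Ri > ereal q" using False Qi by (simp add: Nplus_def q_def)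
      then have "peak Ri \<le> ereal q" by simp
      moreover have "x = q - \<mu> i" using mu2 iN z xQ by simp
      moreover have "0 \<le> \<mu> i" "ereal (\<mu> i) \<le> \<bar>peak Ri - ereal q\<bar>" using mu3 iN Qi by auto
      ultimately have "peak Ri \<le> ereal x \<and> ereal x \<le> ereal q"
        using lower_case[OF p0, of q "\<mu> i"] by simp
      then show ?thesis by blast
    qed
  qed
  have "Ri (ereal x) (ereal q)" using SP_weakly_better[OF Ri _ x0 btw] q0 by simp
  then show False using sx by (simp add: strict_def)
qed

end
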